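(* Let $m\ge1$ and, for $\mathfrak{g}\in\{\mathfrak{h}_s,\mathfrak{r}_s,\mathfrak{d}_s\}$, $\mathcal{G}(q)=\max\{\mathfrak{g}(\tau):\tau\in T,\ \rho(\tau)\le q\}$. Then for $q\in\{\frac12,1,\frac32,2,\dots\}$: $\mathcal{G}(q)=\lfloor q+\frac12\rfloor$ for $\mathfrak{g}=\mathfrak{h}_s$ (simple iterations of semi-implicit methods); $\mathcal{G}(q)=\lfloor\frac23(q+1)\rfloor$ for $\mathfrak{g}=\mathfrak{r}_s$ (modified Newton iterations); $\mathcal{G}(q)=\lfloor\log_2\frac{q+1}{3}\rfloor+2$ for $\mathfrak{g}=\mathfrak{d}_s$ (full Newton iterations).
   Context: $T$: the empty tree $\emptyset$ and all $\tau=[\tau_1,\dots,\tau_\kappa]_l$ with $l\in\{0,\dots,m\}$, $\kappa\ge0$, $\tau_j\in T\setminus\{\emptyset\}$ unordered (new root of color $l$ joined to roots of the $\tau_j$; $\bullet_l$ if $\kappa=0$). Order: $\rho(\emptyset)=0$, $\rho([\tau_1,\dots,\tau_\kappa]_l)=\sum_j\rho(\tau_j)+1$ if $l=0$, $+\frac12$ if $l\ge1$. Maxima over empty sets are $0$. $\mathfrak{h}_s(\emptyset)=0$, $\mathfrak{h}_s([\tau_1,\dots,\tau_\kappa]_l)=1$ if $l>0$, $=1+\max_j\mathfrak{h}_s(\tau_j)$ if $l=0$. $\mathfrak{r}_s(\emptyset)=0$, $\mathfrak{r}_s(\bullet_l)=1$; for $\tau=[\tau_1,\dots,\tau_\kappa]_l$: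 $1$ if $l>0$; $\mathfrak{r}_s(\tau_1)$ if $l=0,\kappa=1$; $1+\max_j\mathfrak{r}_s(\tau_j)$ if $l=0,\kappa\ge2$. $\mathfrak{d}_s(\emptyset)=0$, $\mathfrak{d}_s(\bullet_l)=1$; for $\tau=[\tau_1,\dots,\tau_\kappa]_l$: $1$ if $l>0$; with $M=\max_j\mathfrak{d}_s(\tau_j)$, $M$ if $l=0$ and exactly one $i$ has $\mathfrak{d}_s(\tau_i)=M$, and $M+1$ if $l=0$ and at least two indices attain $M$. (These are the growth functions of simple, modified Newton and full Newton iterations for semi-implicit stochastic Taylor methods, i.e. those with $\Phi_{im}(\tau)\equiv0$ unless the root of $\tau$ has color $0$.) *)

theory Defs
  imports Complex_Main "HOL-Library.Multiset"
begin

text \<open>Colored unordered rooted trees: Empty is the empty tree; Node l ts is the tree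
  with a new root of colour l joined to the roots of the (unordered) multiset ts of subtrees.\<close>
datatype stree = Empty | Node nat "stree multiset"

primrec tree_wf :: "nat \<Rightarrow> stree \<Rightarrow> bool" where
  "tree_wf m Empty = True"
| "tree_wf m (Node l ts) = (l \<le> m \<and> Empty \<notin># ts \<and> (\<forall>b\<in>#image_mset (tree_wf m) ts. b))"

definition maxm :: "nat multiset \<Rightarrow> nat" where
  "maxm M = (if M = {#} then 0 else Max (set_mset M))"

primrec rho :: "stree \<Rightarrow> real" where
  "rho Empty = 0"
| "rho (Node l ts) = (\<Sum>\<^sub># (image_mset rho ts)) + (if l = 0 then 1 else 1/2)"

primrec h_s :: "stree \<Rightarrow> nat" where
  "h_s Empty = 0"
| "h_s (Node l ts) = (if l > 0 then 1 else 1 + maxm (image_mset h_s ts))"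

primrec r_s :: "stree \<Rightarrow> nat" where
  "r_s Empty = 0"
| "r_s (Node l ts) =
     (if ts = {#} then 1
      else if l > 0 then 1
      else if size ts = 1 then maxm (image_mset r_s ts)
      else 1 + maxm (image_mset r_s ts))"

primrec d_s :: "stree \<Rightarrow> nat" where
  "d_s Empty = 0"
| "d_s (Node l ts) =
     (if ts = {#} then 1
      else if l > 0 then 1
      else if count (image_mset d_s ts) (maxm (image_mset d_s ts)) = 1
           then maxm (image_mset d_s ts)
      else maxm (image_mset d_s ts) + 1)"

definition Gmax :: "(stree \<Rightarrow> nat) \<Rightarrow> nat \<Rightarrow> real \<Rightarrow> nat" where
  "Gmax g m q = Max {g \<tau> | \<tau>. tree_wf m \<tau> \<and> rho \<tau> \<le> q}"

end

theory Submission
  imports Defs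
begin

lemma sum_nonneg_mset: "(\<And>x. x \<in># M \<Longrightarrow> 0 \<le> f x) \<Longrightarrow> 0 \<le> (\<Sum>\<^sub># (image_mset f M) :: real)"
  by (induction M) simp_all

lemma rho_nonneg: "0 \<le> rho t"
proof (induction t)
  case Empty then show ?case by simp
next
  case (Node l ts)
  have "0 \<le> \<Sum>\<^sub># (image_mset rho ts)" by (rule sum_nonneg_mset) (rule Node)
  then show ?case by simp
qed

lemma maxm_in: "M \<noteq> {#} \<Longrightarrow> maxm M \<in># M"
  unfolding maxm_def by simp

lemma maxm_ge: "x \<in># M \<Longrightarrow> x \<le> maxm M"
  unfolding maxm_def by (cases "M = {#}") simp_all


lemma rho_node: "1/2 \<le> rho (Node l ts)"
proof -
  have "0 \<le> \<Sum>\<^sub># (image_mset rho ts)" by (rule sum_nonneg_mset) (rule rho_nonneg)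
  then show ?thesis by simp
qed

lemma rho_mem: "t \<in># ts \<Longrightarrow> rho t \<le> \<Sum>\<^sub># (image_mset rho ts)"
proof -
  assume "t \<in># ts"
  from multi_member_split[OF this] obtain A where A: "ts = add_mset t A" ..
  have "0 \<le> \<Sum>\<^sub># (image_mset rho A)" by (rule sum_nonneg_mset) (rule rho_nonneg)
  then show ?thesis unfolding A by simp
qed

lemma rho_mem2: "t \<in># ts \<Longrightarrow> s \<in># ts - {#t#} \<Longrightarrow> rho t + rho s \<le> \<Sum>\<^sub># (image_mset rho ts)"
proof -
  assume a: "t \<in># ts" "s \<in># ts - {#t#}"
  from multi_member_split[OF a(1)] obtain A where A: "ts = add_mset t A" ..
  then have "s \<in># A" using a by (metis add_mset_remove_trivial)
  then have "rho s \<le> \<Sum>\<^sub># (image_mset rho A)" by (rule rho_mem)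
  then show ?thesis unfolding A by simp
qed

lemma maxm_img: "ts \<noteq> {#} \<Longrightarrow> \<exists>t. t \<in># ts \<and> maxm (image_mset f ts) = f t"
proof -
  assume "ts \<noteq> {#}"
  then have "maxm (image_mset f ts) \<in># image_mset f ts" by (intro maxm_in) simp
  then obtain t where "t \<in># ts" "maxm (image_mset f ts) = f t" by (metis imageE set_image_mset)
  then show ?thesis by blast
qed

lemma h_bound: "real (h_s t) \<le> rho t + 1/2"
proof (induction t)
  case Empty then show ?case by simp
next
  case (Node l ts)
  show ?case
  proof (cases "l > 0 \<or> ts = {#}")
    case True
    then show ?thesis using rho_node[of l ts] by (auto simp: maxm_def)
  next
    case False
    then have "ts \<noteq> {#}" by simp
    from maxm_img[OF this, of h_s] obtain t where t: "t \<in># ts" "maxm (image_mset h_s ts) = h_s t" by (elim exE conjE)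
    have "real (h_s t) \<le> rho t + 1/2" using Node.IH[OF t(1)] .
    moreover have "rho t \<le> \<Sum>\<^sub># (image_mset rho ts)" using rho_mem[OF t(1)] .
    ultimately show ?thesis using False t by simp
  qed
qed

lemma r_bound: "tree_wf m t \<Longrightarrow> real (r_s t) \<le> 2/3 * (rho t + 1)"
proof (induction t)
  case Empty then show ?case by simp
next
  case (Node l ts)
  show ?case
  proof (cases "l > 0 \<or> ts = {#}")
    case True
    then show ?thesis using rho_node[of l ts] by (auto simp: maxm_def)
  next
    case False
    then have "ts \<noteq> {#}" by simp
    from maxm_img[OF this, of r_s] obtain t where t: "t \<in># ts" "maxm (image_mset r_s ts) = r_s t" by (elim exE conjE)
    have wf: "tree_wf m t" using Node.prems t(1) by simp
    have IH: "real (r_s t) \<le> 2/3 * (rho t + 1)" using Node.IH[OF t(1) wf] .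
    show ?thesis
    proof (cases "size ts = 1")
      case True
      have "rho t \<le> \<Sum>\<^sub># (image_mset rho ts)" using rho_mem[OF t(1)] .
      then show ?thesis using False True t IH by simp
    next
      case sz: False
      from multi_member_split[OF t(1)] obtain A where A: "ts = add_mset t A" ..
      have "A \<noteq> {#}" using A sz by auto
      then obtain s where s: "s \<in># A" by (metis multiset_nonemptyE)
      have sts: "s \<in># ts - {#t#}" using A s by simp
      have "s \<in># ts" using A s by simp
      then have "s \<noteq> Empty" using Node.prems by auto
      then obtain l' ts' where "s = Node l' ts'" by (cases s) auto
      then have "1/2 \<le> rho s" using rho_node by simp
      moreover have "rho t + rho s \<le> \<Sum>\<^sub># (image_mset rho ts)" using rho_mem2[OF t(1) sts] .
      ultimately show ?thesis using False sz t IH by simp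
    qed
  qed
qed

lemma d_bound: "tree_wf m t \<Longrightarrow> 3 * 2 ^ (d_s t) / 4 - 1 \<le> rho t"
proof (induction t)
  case Empty then show ?case by simp
next
  case (Node l ts)
  show ?case
  proof (cases "l > 0 \<or> ts = {#}")
    case True
    then show ?thesis using rho_node[of l ts] by auto
  next
    case False
    then have "ts \<noteq> {#}" by simp
    from maxm_img[OF this, of d_s] obtain t where t: "t \<in># ts" "maxm (image_mset d_s ts) = d_s t" by (elim exE conjE)
    have wf: "tree_wf m t" using Node.prems t(1) by simp
    have IH: "3 * 2 ^ (d_s t) / 4 - 1 \<le> rho t" using Node.IH[OF t(1) wf] .
    have rt: "rho t \<le> \<Sum>\<^sub># (image_mset rho ts)" using rho_mem[OF t(1)] .
    show ?thesis
    proof (cases "count (image_mset d_s ts) (d_s t) = 1")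
      case True
      then show ?thesis using False t IH rt by simp
    next
      case c: False
      from multi_member_split[OF t(1)] obtain A where A: "ts = add_mset t A" ..
      have "count (image_mset d_s ts) (d_s t) = count (image_mset d_s A) (d_s t) + 1"
        unfolding A by simp
      then have "count (image_mset d_s A) (d_s t) \<noteq> 0" using c by simp
      then have "d_s t \<in># image_mset d_s A" by (simp add: count_eq_zero_iff)
      then obtain s where s: "s \<in># A" "d_s s = d_s t" by (metis imageE set_image_mset)
      have sts: "s \<in># ts - {#t#}" using A s by simp
      have "s \<in># ts" using A s by simp
      then have wfs: "tree_wf m s" using Node.prems by simp
      have IHs: "3 * 2 ^ (d_s s) / 4 - 1 \<le> rho s" using Node.IH[OF \<open>s \<in># ts\<close> wfs] .
      have "rho t + rho s \<le> \<Sum>\<^sub># (image_mset rho ts)" using rho_mem2[OF t(1) sts] .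
      then show ?thesis using False c t IH IHs s(2) by simp
    qed
  qed
qed

primrec Hw :: "nat \<Rightarrow> stree" where
  "Hw 0 = Node 1 {#}"
| "Hw (Suc j) = Node 0 {#Hw j#}"

primrec Rw :: "nat \<Rightarrow> stree" where
  "Rw 0 = Node 1 {#}"
| "Rw (Suc j) = Node 0 {#Rw j, Node 1 {#}#}"

primrec Dw :: "nat \<Rightarrow> stree" where
  "Dw 0 = Node 1 {#}"
| "Dw (Suc j) = Node 0 {#Dw j, Dw j#}"

lemma Hw_ne: "Hw j \<noteq> Empty" by (cases j) simp_all
lemma Rw_ne: "Rw j \<noteq> Empty" by (cases j) simp_all
lemma Dw_ne: "Dw j \<noteq> Empty" by (cases j) simp_all

lemma Hw_props: "1 \<le> m \<Longrightarrow> tree_wf m (Hw j) \<and> rho (Hw j) = j + 1/2 \<and> h_s (Hw j) = j + 1"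
  by (induction j) (auto simp: Hw_ne maxm_def)

lemma Rw_props: "1 \<le> m \<Longrightarrow> tree_wf m (Rw j) \<and> rho (Rw j) = 1/2 + 3 * j / 2 \<and> r_s (Rw j) = j + 1"
  by (induction j) (auto simp: Rw_ne maxm_def field_simps)

lemma Dw_props: "1 \<le> m \<Longrightarrow> tree_wf m (Dw j) \<and> rho (Dw j) = 3 * 2 ^ (Suc j) / 4 - 1 \<and> d_s (Dw j) = j + 1"
  by (induction j) (auto simp: Dw_ne maxm_def)

lemma Gmax_eq:
  assumes "\<And>\<tau>. tree_wf m \<tau> \<Longrightarrow> rho \<tau> \<le> q \<Longrightarrow> g \<tau> \<le> B"
    and "tree_wf m w" "rho w \<le> q" "g w = B"
  shows "Gmax g m q = B"
  unfolding Gmax_def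
proof (rule Max_eqI)
  show "finite {g \<tau> |\<tau>. tree_wf m \<tau> \<and> rho \<tau> \<le> q}"
    by (rule finite_subset[of _ "{..B}"]) (auto dest: assms(1))
  show "\<And>y. y \<in> {g \<tau> |\<tau>. tree_wf m \<tau> \<and> rho \<tau> \<le> q} \<Longrightarrow> y \<le> B" using assms(1) by blast
  show "B \<in> {g \<tau> |\<tau>. tree_wf m \<tau> \<and> rho \<tau> \<le> q}" using assms(2-4) by blast
qed

theorem mainTheorem10:
  fixes m k :: nat
  assumes "m \<ge> 1" and "k \<ge> 1"
  shows "int (Gmax h_s m (real k / 2)) = \<lfloor>real k / 2 + 1/2\<rfloor>
       \<and> int (Gmax r_s m (real k / 2)) = \<lfloor>2/3 * (real k / 2 + 1)\<rfloor>
       \<and> int (Gmax d_s m (real k / 2)) = \<lfloor>log 2 ((real k / 2 + 1) / 3)\<rfloor> + 2"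
proof (intro conjI)
  define B where "B = (k + 1) div 2"
  have B1: "1 \<le> B" using assms(2) unfolding B_def by simp
  have fl1: "\<lfloor>real k / 2 + 1/2\<rfloor> = int B"
  proof -
    have "real k / 2 + 1/2 = real (k+1) / real 2" by (simp add: field_simps)
    then show ?thesis unfolding B_def by (simp only: floor_divide_of_nat_eq)
  qed
  have "Gmax h_s m (real k / 2) = B"
  proof (rule Gmax_eq)
    fix \<tau> assume "tree_wf m \<tau>" "rho \<tau> \<le> real k / 2"
    then have "real (h_s \<tau>) \<le> real k / 2 + 1/2" using h_bound[of \<tau>] by linarith
    then have "2 * h_s \<tau> \<le> k + 1" by linarith
    then show "h_s \<tau> \<le> B" unfolding B_def by linarith
  next
    show "tree_wf m (Hw (B - 1))" using Hw_props[OF assms(1)] by blast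
    have "2 * B \<le> k + 1" unfolding B_def by linarith
    then show "rho (Hw (B - 1)) \<le> real k / 2" using Hw_props[OF assms(1), of "B-1"] B1
      by (simp add: of_nat_diff field_simps)
    show "h_s (Hw (B - 1)) = B" using Hw_props[OF assms(1), of "B-1"] B1 by simp
  qed
  then show "int (Gmax h_s m (real k / 2)) = \<lfloor>real k / 2 + 1/2\<rfloor>" using fl1 by simp
next
  define B where "B = (k + 2) div 3"
  have B1: "1 \<le> B" using assms(2) unfolding B_def by simp
  have fl1: "\<lfloor>2/3 * (real k / 2 + 1)\<rfloor> = int B"
  proof -
    have "2/3 * (real k / 2 + 1) = real (k+2) / real 3" by (simp add: field_simps)
    then show ?thesis unfolding B_def by (simp only: floor_divide_of_nat_eq)
  qed
  have "Gmax r_s m (real k / 2) = B"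
  proof (rule Gmax_eq)
    fix \<tau> assume a: "tree_wf m \<tau>" "rho \<tau> \<le> real k / 2"
    have "2/3 * (rho \<tau> + 1) \<le> 2/3 * (real k / 2 + 1)" using a(2) by (intro mult_left_mono) auto
    then have "real (r_s \<tau>) \<le> 2/3 * (real k / 2 + 1)" using r_bound[OF a(1)] by (rule order_trans[rotated])
    then have "real (3 * r_s \<tau>) \<le> real (k + 2)" by (simp add: field_simps)
    then have "3 * r_s \<tau> \<le> k + 2" by (simp only: of_nat_le_iff)
    then show "r_s \<tau> \<le> B" unfolding B_def by linarith
  next
    show "tree_wf m (Rw (B - 1))" using Rw_props[OF assms(1)] by blast
    have "3 * B \<le> k + 2" unfolding B_def by linarith
    then show "rho (Rw (B - 1)) \<le> real k / 2" using Rw_props[OF assms(1), of "B-1"] B1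
      by (simp add: of_nat_diff field_simps)
    show "r_s (Rw (B - 1)) = B" using Rw_props[OF assms(1), of "B-1"] B1 by simp
  qed
  then show "int (Gmax r_s m (real k / 2)) = \<lfloor>2/3 * (real k / 2 + 1)\<rfloor>" using fl1 by simp
next
  define x where "x = (real k / 2 + 1) / 3"
  define L where "L = \<lfloor>log 2 x\<rfloor>"
  have xpos: "0 < x" unfolding x_def by simp
  have x2: "1/2 \<le> x" using assms(2) unfolding x_def by simp
  have Lb: "2 powr L \<le> x \<and> x < 2 powr (real_of_int L + 1)"
    using floor_log_eq_powr_iff[OF xpos, of 2 L] unfolding L_def by simp
  have "2 powr (-1) < 2 powr (real_of_int L + 1)" using Lb x2 by (simp add: powr_minus)
  then have "-1 < real_of_int L + 1" by (rule powr_less_cancel) simp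
  then have Lge: "-1 \<le> L" by linarith
  define N where "N = nat (L + 2)"
  have N1: "1 \<le> N" using Lge unfolding N_def by simp
  have NL: "real N = real_of_int L + 2" using Lge unfolding N_def by simp
  have pN: "(2::real) ^ N = 4 * 2 powr L"
  proof -
    have "(2::real) ^ N = 2 powr (real N)" by (simp add: powr_realpow)
    also have "\<dots> = 2 powr (real_of_int L + 2)" using NL by simp
    also have "\<dots> = 2 powr L * 2 powr 2" by (simp add: powr_add)
    finally show ?thesis by simp
  qed
  have "Gmax d_s m (real k / 2) = N"
  proof (rule Gmax_eq)
    fix \<tau> assume a: "tree_wf m \<tau>" "rho \<tau> \<le> real k / 2"
    then have "3 * 2 ^ (d_s \<tau>) / 4 - 1 \<le> real k / 2" using d_bound[OF a(1)] by linarith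
    then have a: "(2::real) ^ d_s \<tau> \<le> 4 * x" unfolding x_def by (simp add: field_simps)
    have "(2::real) ^ d_s \<tau> = 2 powr (real (d_s \<tau>))" by (simp add: powr_realpow)
    also have "\<dots> = 2 powr (real (d_s \<tau>) - 2 + 2)" by simp
    also have "\<dots> = 2 powr (real (d_s \<tau>) - 2) * 2 powr 2" by (rule powr_add)
    finally have "2 powr (real (d_s \<tau>) - 2) \<le> x" using a by simp
    then have "2 powr (real (d_s \<tau>) - 2) < 2 powr (real_of_int L + 1)" using Lb by linarith
    then have "real (d_s \<tau>) - 2 < real_of_int L + 1" by (rule powr_less_cancel) simp
    then show "d_s \<tau> \<le> N" using NL by linarith
  next
    show "tree_wf m (Dw (N - 1))" using Dw_props[OF assms(1)] by blast
    have e: "Suc (N - 1) = N" using N1 by simp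
    have "rho (Dw (N - 1)) = 3 * 2 ^ N / 4 - 1" using Dw_props[OF assms(1), of "N-1"] e by simp
    also have "\<dots> = 3 * 2 powr L - 1" using pN by simp
    also have "\<dots> \<le> 3 * x - 1" using Lb by simp
    also have "\<dots> = real k / 2" unfolding x_def by (simp add: field_simps)
    finally show "rho (Dw (N - 1)) \<le> real k / 2" .
    show "d_s (Dw (N - 1)) = N" using Dw_props[OF assms(1), of "N-1"] N1 by simp
  qed
  then show "int (Gmax d_s m (real k / 2)) = \<lfloor>log 2 ((real k / 2 + 1) / 3)\<rfloor> + 2"
    using Lge unfolding N_def L_def x_def by simp
qed

end
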